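(* Let $f(x)\in\mathbb{Q}(x)$ be a rational function of degree $2$. Then: (a) If $f$ has two distinct poles in $\mathbb{P}^1(\mathbb{Q})$, then $f$ satisfies WP. (b) If $f$ has exactly one pole in $\mathbb{P}^1(\mathbb{Q})$, then $f$ satisfies the EWP but does not satisfy WP. (c) If $f$ has no pole in $\mathbb{P}^1(\mathbb{Q})$, then $f$ does not satisfy the EWP.
   Context: For $X\subseteq\mathbb{Q}$ and a positive integer $N$, write $X_N:=\{x_1+\cdots+x_N : x_1,\dots,x_N\in X\}$. $X$ is a base if $X_N=\mathbb{Q}$ for some $N\ge 1$; $X$ is a virtual base if for some $N\ge 1$ every rational number can be written as $\epsilon_1x_1+\cdots+\epsilon_Nx_N$ with $x_i\in X$ and $\epsilon_i\in\{1,-1\}$. For $f\in\mathbb{Q}(x)$, $f(\mathbb{Q})$ is the set of values $f(a)$ at $a\in\mathbb{Q}$ not a pole of $f$; $f$ satisfies WP if $f(\mathbb{Q})$ is a base and satisfies the EWP if $f(\mathbb{Q})$ is a virtual base. The degree of a rational function is the maximum of the degrees of numerator and denominator in lowest terms; poles are considered on the projective line including $\infty$. *)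

theory Defs
  imports "HOL-Computational_Algebra.Polynomial"
begin

definition sumset :: "nat \<Rightarrow> rat set \<Rightarrow> rat set" where
  "sumset N X = {sum_list xs | xs. length xs = N \<and> set xs \<subseteq> X}"

definition is_base :: "rat set \<Rightarrow> bool" where
  "is_base X \<longleftrightarrow> (\<exists>N\<ge>1. sumset N X = UNIV)"

definition is_virtual_base :: "rat set \<Rightarrow> bool" where
  "is_virtual_base X \<longleftrightarrow> (\<exists>N\<ge>1. \<forall>r::rat. \<exists>xs eps.
      length xs = N \<and> length eps = N \<and> set xs \<subseteq> X \<and> set eps \<subseteq> {1, -1} \<and>
      r = sum_list (map2 (*) eps xs))"

text \<open>A rational function f = p/q in lowest terms (q nonzero, p and q coprime).\<close>
definition rf_values :: "rat poly \<Rightarrow> rat poly \<Rightarrow> rat set" where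
  "rf_values p q = {poly p a / poly q a | a. poly q a \<noteq> 0}"

definition rf_degree :: "rat poly \<Rightarrow> rat poly \<Rightarrow> nat" where
  "rf_degree p q = max (degree p) (degree q)"

definition WP :: "rat poly \<Rightarrow> rat poly \<Rightarrow> bool" where
  "WP p q \<longleftrightarrow> is_base (rf_values p q)"

definition EWP :: "rat poly \<Rightarrow> rat poly \<Rightarrow> bool" where
  "EWP p q \<longleftrightarrow> is_virtual_base (rf_values p q)"

text \<open>Poles in P^1(Q): finite rational poles (roots of q, p and q coprime), plus infinity
  when deg p > deg q.\<close>
definition rf_poles :: "rat poly \<Rightarrow> rat poly \<Rightarrow> rat option set" where
  "rf_poles p q = Some ` {a. poly q a = 0} \<union> (if degree q < degree p then {None} else {})"

end

theory Submission
  imports Defs "HOL-Computational_Algebra.Nth_Powers"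
begin

lemma exists_nonroot:
  fixes P :: "rat poly" assumes "P \<noteq> 0" shows "\<exists>t. poly P t \<noteq> 0"
  using assms poly_all_0_iff_0 by blast

lemma poly_deg2:
  fixes p :: "rat poly" assumes "degree p \<le> 2"
  shows "poly p a = coeff p 0 + coeff p 1 * a + coeff p 2 * a^2"
proof -
  have "poly p a = (\<Sum>i\<le>2. coeff p i * a ^ i)"
    unfolding poly_altdef
    by (rule sum.mono_neutral_left) (use assms le_degree in auto)
  also have "\<dots> = coeff p 0 + coeff p 1 * a + coeff p 2 * a^2"
    by (simp add: numeral_2_eq_2)
  finally show ?thesis .
qed

lemma coprime_root:
  fixes p q :: "rat poly"
  assumes "coprime p q" "poly q r = 0" shows "poly p r \<noteq> 0"
proof
  assume "poly p r = 0"
  hence "[:-r,1:] dvd p" by (simp add: poly_eq_0_iff_dvd)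
  moreover have "[:-r,1:] dvd q" using assms(2) by (simp add: poly_eq_0_iff_dvd)
  ultimately have "is_unit [:-r,1:]" using assms(1) coprime_common_divisor by blast
  moreover have "degree [:-r,1::rat:] = 1" by simp
  ultimately show False using is_unit_iff_degree[of "[:-r,1::rat:]"] by simp
qed

lemma three_sum:
  fixes c R :: rat assumes c: "c \<noteq> 0" and R: "R \<noteq> 0"
  shows "\<exists>x y z. x \<noteq> 0 \<and> x \<noteq> 1 \<and> y \<noteq> 0 \<and> y \<noteq> 1 \<and> z \<noteq> 0 \<and> z \<noteq> 1 \<and>
     (x + c/x) + (y + c/y) + (z + c/z) = R"
proof -
  define P where "P = [:0,1:] * [:1,1:] * [:c, c-R, c-R:] * [:c-R, c-R, c:] * [:c, c+R, c:]"
  have "[:c-R, c-R, c:] \<noteq> 0" "[:c, c-R, c-R:] \<noteq> 0" "[:c, c+R, c:] \<noteq> 0"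
    "[:0,1::rat:] \<noteq> 0" "[:1,1::rat:] \<noteq> 0" using c by auto
  hence "P \<noteq> 0" unfolding P_def by (metis mult_eq_0_iff)
  then obtain t where t: "poly P t \<noteq> 0" using exists_nonroot by blast
  have t0: "t \<noteq> 0" and t1: "1 + t \<noteq> 0"
    and b1: "c + (c-R)*t + (c-R)*t^2 \<noteq> 0"
    and b2: "(c-R) + (c-R)*t + c*t^2 \<noteq> 0"
    and b3: "c + (c+R)*t + c*t^2 \<noteq> 0"
  proof -
    have "poly P t = poly [:0,1:] t * poly [:1,1:] t * poly [:c, c-R, c-R:] t *
       poly [:c-R, c-R, c:] t * poly [:c, c+R, c:] t" unfolding P_def by (simp only: poly_mult)
    hence "poly [:0,1:] t \<noteq> 0 \<and> poly [:1,1:] t \<noteq> 0 \<and> poly [:c, c-R, c-R:] t \<noteq> 0 \<and>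
       poly [:c-R, c-R, c:] t \<noteq> 0 \<and> poly [:c, c+R, c:] t \<noteq> 0" using t by auto
    thus "t \<noteq> 0" "1 + t \<noteq> 0" "c + (c-R)*t + (c-R)*t^2 \<noteq> 0"
      "(c-R) + (c-R)*t + c*t^2 \<noteq> 0" "c + (c+R)*t + c*t^2 \<noteq> 0"
      by (simp_all add: algebra_simps power2_eq_square)
  qed
  have q: "1 + t + t^2 \<noteq> 0"
  proof
    assume "1 + t + t^2 = 0"
    moreover have "1 + t + t^2 = (t + 1/2)^2 + 3/4" by (simp add: power2_eq_square algebra_simps)
    moreover have "(t + 1/2)^2 \<ge> 0" by simp
    ultimately show False by linarith
  qed
  define x where "x = c * (1 + t + t^2) / (R * t * (1 + t))"
  have x0: "x \<noteq> 0" unfolding x_def using c R t0 t1 q by simp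
  have D: "R * t * (1 + t) \<noteq> 0" using R t0 t1 by simp
  have xe: "c * (1 + t + t^2) = R * t * (1 + t) * x" unfolding x_def using D by simp
  have "x \<noteq> 1"
  proof
    assume "x = 1"
    hence "c * (1 + t + t^2) = R * t * (1 + t)" using xe by simp
    hence "c + (c-R)*t + (c-R)*t^2 = 0" by (simp add: algebra_simps power2_eq_square)
    thus False using b1 by simp
  qed
  moreover have "t * x \<noteq> 1"
  proof
    assume tx: "t * x = 1"
    have "c * (1 + t + t^2) = R * (1 + t) * (t * x)" using xe by (simp add: algebra_simps)
    hence "c * (1 + t + t^2) = R * (1 + t)" using tx by simp
    hence "(c-R) + (c-R)*t + c*t^2 = 0" by (simp add: algebra_simps power2_eq_square)
    thus False using b2 by simp
  qed
  moreover have "-(1+t) * x \<noteq> 1"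
  proof
    assume tx: "-(1+t) * x = 1"
    have "c * (1 + t + t^2) = - R * t * (-(1+t) * x)" using xe by (simp add: algebra_simps)
    hence "c * (1 + t + t^2) = - R * t" using tx by simp
    hence "c + (c+R)*t + c*t^2 = 0" by (simp add: algebra_simps power2_eq_square)
    thus False using b3 by simp
  qed
  moreover have "(x + c/x) + (t*x + c/(t*x)) + (-(1+t)*x + c/(-(1+t)*x)) = R"
  proof -
    define Q where "Q = 1 + t + t^2"
    define M where "M = t * (1 + t)"
    have Q0: "Q \<noteq> 0" and M0: "M \<noteq> 0" using q t0 t1 by (simp_all add: Q_def M_def)
    have xQ: "x = c * Q / (R * M)" by (simp add: x_def Q_def M_def)
    have i1: "c/(t*x) = (c/x)*(1/t)" using x0 t0 by simp
    have "c/(-(1+t)*x) = c/(-((1+t)*x))" by (simp only: mult_minus_left)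
    also have "\<dots> = -(c/((1+t)*x))" by (rule divide_minus_right)
    also have "c/((1+t)*x) = (c/x)*(1/(1+t))" by simp
    finally have i2: "c/(-(1+t)*x) = -((c/x)*(1/(1+t)))" .
    have i3: "1 + 1/t - 1/(1+t) = Q / M"
      using t0 t1 unfolding Q_def M_def by (simp add: field_simps power2_eq_square)
    have ring: "(x + u) + (t*x + u*a) + (-(1+t)*x + -(u*b)) = u * (1 + a - b)" for u a b :: rat
      by (simp add: algebra_simps)
    have "(x + c/x) + (t*x + c/(t*x)) + (-(1+t)*x + c/(-(1+t)*x))
        = (c/x) * (1 + 1/t - 1/(1+t))" unfolding i1 i2 by (rule ring)
    also have "\<dots> = (c/x) * (Q / M)" using i3 by simp
    also have "\<dots> = R" unfolding xQ using c R Q0 M0 by (simp add: field_simps)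
    finally show ?thesis .
  qed
  ultimately show ?thesis using x0 t0 t1
    by (intro exI[of _ x] exI[of _ "t*x"] exI[of _ "-(1+t)*x"]) auto
qed

lemma WP_form:
  fixes p q :: "rat poly" and \<alpha> \<gamma> \<beta> :: rat
  assumes a: "\<alpha> \<noteq> 0" and g: "\<gamma> \<noteq> 0"
    and V: "\<And>w. w \<noteq> 0 \<Longrightarrow> w \<noteq> 1 \<Longrightarrow> \<alpha>*w + \<gamma>/w + \<beta> \<in> rf_values p q"
  shows "WP p q"
proof -
  define c where "c = \<gamma>/\<alpha>"
  have c: "c \<noteq> 0" using a g by (simp add: c_def)
  define G where "G = (\<lambda>w. \<alpha>*w + \<gamma>/w + \<beta>)"
  have G: "G w = \<alpha> * (w + c/w) + \<beta>" if "w \<noteq> 0" for w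
    using a that by (simp add: G_def c_def field_simps)
  have "sumset 6 (rf_values p q) = UNIV"
  proof (intro set_eqI iffI)
    fix r :: rat
    define T where "T = (r - 6*\<beta>)/\<alpha>"
    define R1 where "R1 = (if T = 0 then 1 else T/2)"
    define R2 where "R2 = T - R1"
    have R1: "R1 \<noteq> 0" and R2: "R2 \<noteq> 0" unfolding R1_def R2_def by auto
    obtain x1 y1 z1 where h1: "x1 \<noteq> 0" "x1 \<noteq> 1" "y1 \<noteq> 0" "y1 \<noteq> 1" "z1 \<noteq> 0" "z1 \<noteq> 1"
      "(x1 + c/x1) + (y1 + c/y1) + (z1 + c/z1) = R1" using three_sum[OF c R1] by blast
    obtain x2 y2 z2 where h2: "x2 \<noteq> 0" "x2 \<noteq> 1" "y2 \<noteq> 0" "y2 \<noteq> 1" "z2 \<noteq> 0" "z2 \<noteq> 1"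
      "(x2 + c/x2) + (y2 + c/y2) + (z2 + c/z2) = R2" using three_sum[OF c R2] by blast
    define xs where "xs = map G [x1,y1,z1,x2,y2,z2]"
    have "length xs = 6" unfolding xs_def by simp
    moreover have "set xs \<subseteq> rf_values p q" unfolding xs_def G_def using V h1 h2 by auto
    moreover have "sum_list xs = r"
    proof -
      have "sum_list xs = \<alpha> * (((x1 + c/x1) + (y1 + c/y1) + (z1 + c/z1)) +
          ((x2 + c/x2) + (y2 + c/y2) + (z2 + c/z2))) + 6 * \<beta>"
      proof -
        have "sum_list xs = G x1 + G y1 + G z1 + (G x2 + G y2 + G z2)" by (simp add: xs_def)
        also have "\<dots> = \<alpha> * (x1 + c/x1) + \<beta> + (\<alpha> * (y1 + c/y1) + \<beta>) + (\<alpha> * (z1 + c/z1) + \<beta>)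
          + ((\<alpha> * (x2 + c/x2) + \<beta>) + (\<alpha> * (y2 + c/y2) + \<beta>) + (\<alpha> * (z2 + c/z2) + \<beta>))"
          by (simp only: G[OF h1(1)] G[OF h1(3)] G[OF h1(5)] G[OF h2(1)] G[OF h2(3)] G[OF h2(5)])
        finally show ?thesis by (simp only: distrib_left)
      qed
      also have "\<dots> = \<alpha> * T + 6 * \<beta>" using h1 h2 R2_def by simp
      also have "\<dots> = r" using a by (simp add: T_def)
      finally show ?thesis .
    qed
    ultimately show "r \<in> sumset 6 (rf_values p q)" unfolding sumset_def by blast
  qed auto
  thus ?thesis unfolding WP_def is_base_def by (intro exI[of _ 6]) auto
qed

lemma EWP_form:
  fixes p q :: "rat poly" and A B C :: rat
  assumes a: "A \<noteq> 0"
    and V: "\<And>w. w \<noteq> 0 \<Longrightarrow> A*w^2 + B*w + C \<in> rf_values p q"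
  shows "EWP p q"
proof -
  have "\<exists>xs eps. length xs = 2 \<and> length eps = 2 \<and> set xs \<subseteq> rf_values p q \<and> set eps \<subseteq> {1, -1} \<and>
      r = sum_list (map2 (*) eps xs)" for r
  proof -
    define P where "P = [:0,1:] * [:r, -B, A:] * [:r, -B, -A:]"
    have "[:0,1::rat:] \<noteq> 0" "[:r, -B, A:] \<noteq> 0" "[:r, -B, -A:] \<noteq> 0" using a by auto
    hence "P \<noteq> 0" unfolding P_def by (metis mult_eq_0_iff)
    then obtain d where d: "poly P d \<noteq> 0" using exists_nonroot by blast
    have "poly P d = poly [:0,1:] d * poly [:r, -B, A:] d * poly [:r, -B, -A:] d"
      unfolding P_def by (simp only: poly_mult)
    hence "poly [:0,1:] d \<noteq> 0 \<and> poly [:r, -B, A:] d \<noteq> 0 \<and> poly [:r, -B, -A:] d \<noteq> 0"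
      using d by auto
    hence d0: "d \<noteq> 0" and b1: "r - B*d + A*d^2 \<noteq> 0" and b2: "r - B*d - A*d^2 \<noteq> 0"
      by (simp_all add: algebra_simps power2_eq_square)
    define s where "s = (r/d - B)/A"
    define y where "y = (s + d)/2"
    define z where "z = (s - d)/2"
    have y0: "y \<noteq> 0"
    proof
      assume "y = 0" hence "s = -d" by (simp add: y_def)
      hence "r/d - B = - A * d" using a by (simp add: s_def field_simps)
      hence "r - B*d + A*d^2 = 0" using d0 by (simp add: field_simps power2_eq_square)
      thus False using b1 by simp
    qed
    have z0: "z \<noteq> 0"
    proof
      assume "z = 0" hence "s = d" by (simp add: z_def)
      hence "r/d - B = A * d" using a by (simp add: s_def field_simps)
      hence "r - B*d - A*d^2 = 0" using d0 by (simp add: field_simps power2_eq_square)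
      thus False using b2 by simp
    qed
    have yz1: "y - z = d" and yz2: "y + z = s" by (simp_all add: y_def z_def field_simps)
    have "(A*y^2 + B*y + C) - (A*z^2 + B*z + C) = (y - z) * (A*(y + z) + B)"
      by (simp add: algebra_simps power2_eq_square)
    also have "\<dots> = d * (A*s + B)" using yz1 yz2 by simp
    also have "\<dots> = r" using a d0 by (simp add: s_def field_simps)
    finally have e: "(A*y^2 + B*y + C) - (A*z^2 + B*z + C) = r" .
    show ?thesis
      by (rule exI[of _ "[A*y^2 + B*y + C, A*z^2 + B*z + C]"], rule exI[of _ "[1,-1]"])
         (use V y0 z0 e in auto)
  qed
  thus ?thesis unfolding EWP_def is_virtual_base_def by (intro exI[of _ 2]) auto
qed

lemma sum_lower:
  assumes "\<forall>v\<in>X. s * v \<ge> m" "set xs \<subseteq> X"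
  shows "s * sum_list xs \<ge> of_nat (length xs) * (m::rat)"
  using assms(2)
proof (induction xs)
  case (Cons x xs)
  hence "s * x \<ge> m" "s * sum_list xs \<ge> of_nat (length xs) * m" using assms(1) by auto
  thus ?case by (simp add: algebra_simps)
qed simp

lemma notWP_form:
  fixes p q :: "rat poly" and A B C :: rat
  assumes a: "A \<noteq> 0"
    and V: "\<And>v. v \<in> rf_values p q \<Longrightarrow> \<exists>w. v = A*w^2 + B*w + C"
  shows "\<not> WP p q"
proof
  assume "WP p q"
  then obtain N where N: "N \<ge> 1" "sumset N (rf_values p q) = UNIV"
    unfolding WP_def is_base_def by blast
  define s where "s = sgn A"
  have sA: "s * A = \<bar>A\<bar>" and s2: "s * s = 1" using a by (auto simp: s_def sgn_if)
  define m where "m = s * C - B^2 / (4*\<bar>A\<bar>)"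
  have bound: "s * v \<ge> m" if vV: "v \<in> rf_values p q" for v
  proof -
    obtain w where w: "v = A*w^2 + B*w + C" using V vV by blast
    have pos: "\<bar>A\<bar> > 0" using a by simp
    have "0 \<le> (2*\<bar>A\<bar>*w + s*B)^2 / (4*\<bar>A\<bar>)" using pos by simp
    also have "(2*\<bar>A\<bar>*w + s*B)^2 / (4*\<bar>A\<bar>) = \<bar>A\<bar>*w^2 + s*B*w + (s*s)*B^2/(4*\<bar>A\<bar>)"
      using pos by (simp add: field_simps power2_eq_square)
    finally have "0 \<le> \<bar>A\<bar>*w^2 + s*B*w + B^2/(4*\<bar>A\<bar>)" using s2 by simp
    moreover have "s * v = \<bar>A\<bar>*w^2 + s*B*w + s*C" using w sA by (simp add: algebra_simps)
    ultimately show ?thesis unfolding m_def by linarith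
  qed
  define r where "r = s * (of_nat N * m - 1)"
  have "r \<in> sumset N (rf_values p q)" using N by simp
  then obtain xs where xs: "length xs = N" "set xs \<subseteq> rf_values p q" "r = sum_list xs"
    unfolding sumset_def by blast
  have "s * r \<ge> of_nat N * m" using sum_lower[where X="rf_values p q" and s=s and m=m and xs=xs] bound xs by auto
  moreover have "s * r = of_nat N * m - 1" unfolding r_def using s2 by (simp add: algebra_simps)
  ultimately show False by linarith
qed

lemma case_const:
  fixes p q :: "rat poly"
  assumes hq: "\<And>a. poly q a = q0" and q0: "q0 \<noteq> 0"
    and hp: "\<And>a. poly p a = p0 + p1*a + p2*a^2" and p2: "p2 \<noteq> 0"
  shows "EWP p q \<and> \<not> WP p q"
proof
  have e: "poly p w / poly q w = (p2/q0)*w^2 + (p1/q0)*w + p0/q0" for w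
    unfolding hp hq using q0 by (simp add: field_simps)
  show "EWP p q"
  proof (rule EWP_form[where A="p2/q0" and B="p1/q0" and C="p0/q0"])
    show "p2/q0 \<noteq> 0" using p2 q0 by simp
    fix w :: rat
    show "(p2/q0)*w^2 + (p1/q0)*w + p0/q0 \<in> rf_values p q"
      unfolding rf_values_def using e[of w] hq q0 by (metis (mono_tags, lifting) mem_Collect_eq)
  qed
  show "\<not> WP p q"
  proof (rule notWP_form[where A="p2/q0" and B="p1/q0" and C="p0/q0"])
    show "p2/q0 \<noteq> 0" using p2 q0 by simp
    fix v assume "v \<in> rf_values p q"
    then obtain a where "v = poly p a / poly q a" by (auto simp: rf_values_def)
    thus "\<exists>w. v = (p2/q0)*w^2 + (p1/q0)*w + p0/q0" using e by blast
  qed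
qed

lemma case_lin:
  fixes p q :: "rat poly"
  assumes hq: "\<And>a. poly q a = q0 + q1*a" and q1: "q1 \<noteq> 0"
    and hp: "\<And>a. poly p a = p0 + p1*a + p2*a^2" and p2: "p2 \<noteq> 0"
    and pr: "p0 + p1*r + p2*r^2 \<noteq> 0" and r: "r = - q0/q1"
  shows "WP p q"
proof (rule WP_form[where \<alpha>="p2/q1" and \<gamma>="(p0 + p1*r + p2*r^2)/q1" and \<beta>="(p1 + 2*p2*r)/q1"])
  show "p2/q1 \<noteq> 0" "(p0 + p1*r + p2*r^2)/q1 \<noteq> 0" using p2 q1 pr by simp_all
  fix w :: rat assume w0: "w \<noteq> 0"
  have qa: "poly q (r + w) = q1 * w" unfolding hq r using q1 by (simp add: field_simps)
  hence qa0: "poly q (r + w) \<noteq> 0" using q1 w0 by simp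
  have "poly p (r + w) / poly q (r + w) =
      p2/q1 * w + (p0 + p1*r + p2*r^2)/q1 / w + (p1 + 2*p2*r)/q1"
    unfolding qa hp using q1 w0 by (simp add: field_simps power2_eq_square)
  thus "p2/q1 * w + (p0 + p1*r + p2*r^2)/q1 / w + (p1 + 2*p2*r)/q1 \<in> rf_values p q"
    unfolding rf_values_def using qa0 by (metis (mono_tags, lifting) mem_Collect_eq)
qed

lemma case_two:
  fixes p q :: "rat poly"
  assumes hq: "\<And>a. poly q a = q2 * (a - r) * (a - s)" and q2: "q2 \<noteq> 0" and rs: "r \<noteq> s"
    and hp: "\<And>a. poly p a = p0 + p1*a + p2*a^2"
    and pr: "poly p r \<noteq> 0" and ps: "poly p s \<noteq> 0"
  shows "WP p q"
proof -
  define d where "d = s - r"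
  have d0: "d \<noteq> 0" using rs by (simp add: d_def)
  define PR where "PR = p0 + p1*r + p2*r^2"
  define PS where "PS = p0 + p1*s + p2*s^2"
  have PR: "PR \<noteq> 0" and PS: "PS \<noteq> 0" using pr ps hp by (simp_all add: PR_def PS_def)
  show ?thesis
  proof (rule WP_form[where \<alpha>="PS/(q2*d^2)" and \<gamma>="PR/(q2*d^2)" and \<beta>="p2/q2 - (PR+PS)/(q2*d^2)"])
    show "PS/(q2*d^2) \<noteq> 0" "PR/(q2*d^2) \<noteq> 0" using PR PS q2 d0 by simp_all
    fix w :: rat assume w0: "w \<noteq> 0" and w1: "w \<noteq> 1"
    have w1': "w - 1 \<noteq> 0" using w1 by simp
    define a where "a = s + d/(w-1)"
    have as: "a - s = d/(w-1)" by (simp add: a_def)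
    have ar: "a - r = d*w/(w-1)" using w1' by (simp add: a_def d_def field_simps)
    have qa: "poly q a = q2 * d^2 * w / (w-1)^2"
      unfolding hq as ar using w1' by (simp add: field_simps power2_eq_square)
    hence qa0: "poly q a \<noteq> 0" using q2 d0 w0 w1' by simp
    have r_eq: "r = s - d" by (simp add: d_def)
    define e where "e = d/(w-1)"
    define L where "L = p1 + 2*p2*s"
    have pa1: "poly p a = PS + L*e + p2*e^2"
      unfolding hp PS_def L_def e_def a_def by (simp add: algebra_simps power2_eq_square)
    have Ld: "L * d = PS - PR + p2*d^2"
      unfolding L_def PS_def PR_def r_eq by (simp add: algebra_simps power2_eq_square)
    have "L*e = (L*d)/(w-1)" by (simp add: e_def)
    moreover have "e^2 = d^2/(w-1)^2" by (simp add: e_def power_divide)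
    ultimately have pa2: "poly p a = PS + (PS - PR + p2*d^2)/(w-1) + p2*d^2/(w-1)^2"
      using pa1 Ld by simp
    have gen: "PS + (PS - PR + p2*d^2)/z + p2*d^2/z^2 =
        (PS*(z+1)^2 - PS*(z+1) - PR*(z+1) + PR + p2*d^2*(z+1)) / z^2" if z0: "z \<noteq> 0" for z
    proof -
      have "PS + (PS - PR + p2*d^2)/z + p2*d^2/z^2 = (PS*z^2 + (PS - PR + p2*d^2)*z + p2*d^2)/z^2"
        using z0 by (simp add: field_simps power2_eq_square)
      also have "PS*z^2 + (PS - PR + p2*d^2)*z + p2*d^2 =
          PS*(z+1)^2 - PS*(z+1) - PR*(z+1) + PR + p2*d^2*(z+1)"
        by (simp add: algebra_simps power2_eq_square)
      finally show ?thesis .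
    qed
    have "poly p a = (PS*w^2 - PS*w - PR*w + PR + p2*d^2*w) / (w-1)^2"
      unfolding pa2 gen[OF w1'] by simp
    hence "poly p a / poly q a = (PS*w^2 - PS*w - PR*w + PR + p2*d^2*w) / (q2*d^2*w)"
      unfolding qa using w1' w0 q2 d0 by (simp add: field_simps)
    also have "\<dots> = PS/(q2*d^2) * w + PR/(q2*d^2) / w + (p2/q2 - (PR+PS)/(q2*d^2))"
      using w0 q2 d0 by (simp add: field_simps power2_eq_square)
    finally have "poly p a / poly q a = PS/(q2*d^2) * w + PR/(q2*d^2) / w + (p2/q2 - (PR+PS)/(q2*d^2))" .
    thus "PS/(q2*d^2) * w + PR/(q2*d^2) / w + (p2/q2 - (PR+PS)/(q2*d^2)) \<in> rf_values p q"
      unfolding rf_values_def using qa0 by (metis (mono_tags, lifting) mem_Collect_eq)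
  qed
qed

lemma case_double:
  fixes p q :: "rat poly"
  assumes hq: "\<And>a. poly q a = q2 * (a - r)^2" and q2: "q2 \<noteq> 0"
    and hp: "\<And>a. poly p a = p0 + p1*a + p2*a^2"
    and pr: "poly p r \<noteq> 0"
  shows "EWP p q \<and> \<not> WP p q"
proof
  define PR where "PR = p0 + p1*r + p2*r^2"
  have PR: "PR \<noteq> 0" using pr hp by (simp add: PR_def)
  have e: "poly p (r + 1/w) / poly q (r + 1/w) = (PR/q2)*w^2 + ((p1 + 2*p2*r)/q2)*w + p2/q2"
    if w0: "w \<noteq> 0" for w
    unfolding hp hq PR_def using q2 w0 by (simp add: field_simps power2_eq_square)
  have q0: "poly q (r + 1/w) \<noteq> 0" if "w \<noteq> 0" for w using hq q2 that by simp
  show "EWP p q"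
  proof (rule EWP_form[where A="PR/q2" and B="(p1 + 2*p2*r)/q2" and C="p2/q2"])
    show "PR/q2 \<noteq> 0" using PR q2 by simp
    fix w :: rat assume w0: "w \<noteq> 0"
    show "(PR/q2)*w^2 + ((p1 + 2*p2*r)/q2)*w + p2/q2 \<in> rf_values p q"
      unfolding rf_values_def using e[OF w0] q0[OF w0] by (metis (mono_tags, lifting) mem_Collect_eq)
  qed
  show "\<not> WP p q"
  proof (rule notWP_form[where A="PR/q2" and B="(p1 + 2*p2*r)/q2" and C="p2/q2"])
    show "PR/q2 \<noteq> 0" using PR q2 by simp
    fix v assume "v \<in> rf_values p q"
    then obtain a where a: "v = poly p a / poly q a" "poly q a \<noteq> 0" by (auto simp: rf_values_def)
    have ar: "a - r \<noteq> 0" using a(2) hq by auto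
    define w where "w = 1 / (a - r)"
    have w0: "w \<noteq> 0" using ar by (simp add: w_def)
    have "a = r + 1/w" using ar by (simp add: w_def)
    thus "\<exists>w. v = (PR/q2)*w^2 + ((p1 + 2*p2*r)/q2)*w + p2/q2" using e[OF w0] a(1) by metis
  qed
qed

lemma sq_dvd:
  fixes l X :: int assumes l: "prime l" and d: "l ^ k dvd X^2"
  shows "l ^ ((k+1) div 2) dvd X"
proof (cases "X = 0")
  case True thus ?thesis by simp
next
  case False
  have nu: "\<not> is_unit l" using l not_prime_unit by blast
  have X2: "X^2 \<noteq> 0" using False by simp
  have "k \<le> multiplicity l (X^2)" using d X2 nu power_dvd_iff_le_multiplicity by blast
  also have "multiplicity l (X^2) = 2 * multiplicity l X"
    using prime_elem_multiplicity_power_distrib[OF prime_imp_prime_elem[OF l] False, of 2] by simp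
  finally have "(k+1) div 2 \<le> multiplicity l X" by linarith
  thus ?thesis using False nu power_dvd_iff_le_multiplicity by blast
qed

lemma odd_key:
  fixes l D D' X Y :: int
  assumes l: "prime l" and D: "D = l^(2*j+1) * D'" and nD: "\<not> l dvd D'" and nY: "\<not> l dvd Y"
  shows "\<not> l^(2*j+2) dvd X^2 - D*Y^2"
proof
  assume h: "l^(2*j+2) dvd X^2 - D*Y^2"
  have "l^(2*j+1) dvd l^(2*j+2)" by (rule le_imp_power_dvd) simp
  hence h1: "l^(2*j+1) dvd X^2 - D*Y^2" using h dvd_trans by blast
  have h2: "l^(2*j+1) dvd D*Y^2" using D by simp
  have "l^(2*j+1) dvd (X^2 - D*Y^2) + D*Y^2" using h1 h2 by (rule dvd_add)
  hence "l^(2*j+1) dvd X^2" by simp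
  hence "l^((2*j+1+1) div 2) dvd X" by (rule sq_dvd[OF l])
  hence "l^(j+1) dvd X" by simp
  hence "(l^(j+1))^2 dvd X^2" by (rule dvd_power_same)
  moreover have "(l^(j+1))^2 = l^((j+1)*2)" by (rule power_mult[symmetric])
  moreover have "(j+1)*2 = 2*j+2" by simp
  ultimately have h3: "l^(2*j+2) dvd X^2" by metis
  have "l^(2*j+2) dvd X^2 - (X^2 - D*Y^2)" using h3 h by (rule dvd_diff)
  hence "l^(2*j+1) * l dvd l^(2*j+1) * (D' * Y^2)" using D by (simp add: algebra_simps)
  hence "l^(2*j+1) = 0 \<or> l dvd D' * Y^2" by (simp only: dvd_mult_cancel_left)
  moreover have "l^(2*j+1) \<noteq> 0" using l by (simp add: prime_gt_0_int less_imp_neq[symmetric])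
  ultimately have "l dvd D' * Y^2" by blast
  hence "l dvd D' \<or> l dvd Y^2" using l prime_dvd_mult_iff by blast
  thus False using nD nY l prime_dvd_power by blast
qed

lemma four_lemma: "(4::int) dvd s \<Longrightarrow> s = 4*K + 1 \<or> s = 4*K+2 \<Longrightarrow> False"
  by presburger

lemma two_key:
  fixes k k' X Y :: int
  assumes k: "k = 2^t * k'" and ok: "odd k'" and oY: "odd Y"
  shows "\<not> 2^(2*t+2) dvd X^2 + k^2*Y^2"
proof
  assume h: "2^(2*t+2) dvd X^2 + k^2*Y^2"
  have "(2::int)^(2*t) dvd 2^(2*t+2)" by (rule le_imp_power_dvd) simp
  hence h1: "(2::int)^(2*t) dvd X^2 + k^2*Y^2" using h dvd_trans by blast
  have k2: "k^2 = 2^(2*t) * k'^2" using k by (simp add: power_mult_distrib power_mult[symmetric] mult.commute)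
  have h2: "(2::int)^(2*t) dvd k^2*Y^2" using k2 by simp
  have "(2::int)^(2*t) dvd (X^2 + k^2*Y^2) - k^2*Y^2" using h1 h2 by (rule dvd_diff)
  hence "(2::int)^(2*t) dvd X^2" by simp
  hence "(2::int)^t dvd X" using sq_dvd[of 2 "2*t" X] by simp
  then obtain X' where X': "X = 2^t * X'" by (auto elim: dvdE)
  have "X^2 + k^2*Y^2 = 2^(2*t) * (X'^2 + (k'*Y)^2)"
    using X' k2 by (simp add: power_mult_distrib power_mult[symmetric] algebra_simps)
  moreover have "(2::int)^(2*t+2) = 2^(2*t) * 4" by (simp add: power_add)
  ultimately have "2^(2*t) * 4 dvd 2^(2*t) * (X'^2 + (k'*Y)^2)" using h by simp
  hence h4: "4 dvd X'^2 + (k'*Y)^2" by (subst (asm) dvd_mult_cancel_left) auto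
  have o: "odd (k'*Y)" using ok oY by simp
  from o obtain b where b: "k'*Y = 2*b+1" by (rule oddE)
  have "(k'*Y)^2 = 4*(b^2+b) + 1" using b by (simp add: power2_eq_square algebra_simps)
  moreover obtain a where a: "X'^2 = 4*a \<or> X'^2 = 4*a + 1"
  proof (cases "even X'")
    case True then obtain a where "X' = 2*a" by (rule evenE)
    hence "X'^2 = 4*a^2" by (simp add: power2_eq_square)
    thus ?thesis using that by blast
  next
    case False then obtain a where "X' = 2*a+1" by (rule oddE)
    hence "X'^2 = 4*(a^2+a) + 1" by (simp add: power2_eq_square algebra_simps)
    thus ?thesis using that by blast
  qed
  ultimately have "X'^2 + (k'*Y)^2 = 4*(a+b^2+b) + 1 \<or> X'^2 + (k'*Y)^2 = 4*(a+b^2+b) + 2"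
    by auto
  thus False using h4 four_lemma by blast
qed

lemma prime_choice:
  fixes D :: int assumes ns: "\<forall>k. D \<noteq> k^2"
  shows "\<exists>l E. prime l \<and> (\<forall>X Y. \<not> l dvd Y \<longrightarrow> \<not> l^(Suc E) dvd X^2 - D*Y^2)"
proof (cases "\<exists>l. prime l \<and> odd (multiplicity l D)")
  case True
  then obtain l where l: "prime l" "odd (multiplicity l D)" by blast
  have D0: "D \<noteq> 0" using ns[rule_format, of 0] by simp
  have nu: "\<not> is_unit l" using l not_prime_unit by blast
  obtain D' where D': "D = l ^ multiplicity l D * D'" "\<not> l dvd D'"
    using multiplicity_decompose'[OF D0 nu] by blast
  from l(2) obtain j where j: "multiplicity l D = 2*j+1" by (rule oddE)
  show ?thesis
  proof (intro exI conjI allI impI)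
    fix X Y :: int assume "\<not> l dvd Y"
    thus "\<not> l^(Suc (2*j+1)) dvd X^2 - D*Y^2"
      using odd_key[OF l(1) _ D'(2), of D j Y X] D'(1) j by simp
  qed (rule l(1))
next
  case False
  hence "\<forall>p. prime p \<longrightarrow> 2 dvd multiplicity p D" by auto
  hence "is_nth_power 2 (normalize D)" using is_nth_power_conv_multiplicity[of 2 D] by simp
  then obtain k where k: "\<bar>D\<bar> = k^2" by (auto simp: is_nth_power_def)
  have Dn: "D < 0"
  proof (rule ccontr)
    assume "\<not> D < 0" hence "D = k^2" using k by simp
    thus False using ns by blast
  qed
  hence Dk: "D = -(k^2)" using k by simp
  have k0: "k \<noteq> 0" using Dn Dk by auto
  have nu: "\<not> is_unit (2::int)" by simp
  obtain k' where k': "k = 2 ^ multiplicity 2 k * k'" "\<not> 2 dvd k'"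
    using multiplicity_decompose'[OF k0 nu] by blast
  show ?thesis
  proof (intro exI conjI allI impI)
    fix X Y :: int assume "\<not> 2 dvd Y"
    thus "\<not> 2^(Suc (2*multiplicity 2 k + 1)) dvd X^2 - D*Y^2"
      using two_key[OF k'(1), of Y X] k'(2) Dk by simp
  qed simp
qed

definition lint :: "int \<Rightarrow> rat set" where
  "lint l = {x. \<exists>n m::int. \<not> l dvd m \<and> x = of_int n / of_int m}"

lemma lint_add: assumes "prime l" "x \<in> lint l" "y \<in> lint l" shows "x + y \<in> lint l"
proof -
  obtain n m where a: "\<not> l dvd m" "x = of_int n / of_int m" using assms(2) by (auto simp: lint_def)
  obtain n' m' where b: "\<not> l dvd m'" "y = of_int n' / of_int m'" using assms(3) by (auto simp: lint_def)
  have m0: "m \<noteq> 0" "m' \<noteq> 0" using a b by auto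
  have "\<not> l dvd m * m'" using a b assms(1) prime_dvd_mult_iff by blast
  moreover have "x + y = of_int (n*m' + n'*m) / of_int (m*m')"
    using a b m0 by (simp add: field_simps)
  ultimately show ?thesis unfolding lint_def by blast
qed

lemma lint_neg: assumes "x \<in> lint l" shows "- x \<in> lint l"
proof -
  obtain n m where a: "\<not> l dvd m" "x = of_int n / of_int m" using assms by (auto simp: lint_def)
  hence "- x = of_int (-n) / of_int m" by simp
  thus ?thesis using a unfolding lint_def by blast
qed

lemma lint_not: assumes "prime l" shows "1 / of_int l \<notin> lint l"
proof
  assume "1 / of_int l \<in> lint l"
  then obtain n m where a: "\<not> l dvd m" "1 / of_int l = (of_int n / of_int m :: rat)"
    by (auto simp: lint_def)
  have l0: "l \<noteq> 0" using assms by auto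
  have m0: "m \<noteq> 0" using a by auto
  have "(of_int m :: rat) = of_int (l * n)" using a(2) l0 m0 by (simp add: field_simps)
  hence "m = l * n" by (simp only: of_int_eq_iff)
  thus False using a(1) by simp
qed

lemma frac_in:
  fixes l PF QF :: int
  assumes l: "prime l" and Q0: "QF \<noteq> 0" and nd: "\<not> l^(Suc E) dvd QF"
  shows "of_int l ^ E * (of_int PF / of_int QF) \<in> lint l"
proof -
  have nu: "\<not> is_unit l" using l not_prime_unit by blast
  obtain Q' where Q': "QF = l ^ multiplicity l QF * Q'" "\<not> l dvd Q'"
    using multiplicity_decompose'[OF Q0 nu] by blast
  define k where "k = multiplicity l QF"
  have "k \<le> E"
  proof (rule ccontr)
    assume "\<not> k \<le> E"
    hence "Suc E \<le> k" by simp
    hence "l^(Suc E) dvd l^k" by (rule le_imp_power_dvd)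
    moreover have "l^k dvd QF" unfolding k_def by (rule multiplicity_dvd)
    ultimately show False using nd dvd_trans by blast
  qed
  hence E: "E = k + (E - k)" by simp
  have l0: "(of_int l :: rat) \<noteq> 0" using l by auto
  have Q'0: "Q' \<noteq> 0" using Q' Q0 by auto
  have "of_int l ^ E * (of_int PF / of_int QF) =
        of_int l ^ k * of_int l ^ (E - k) * (of_int PF / (of_int l ^ k * of_int Q') :: rat)"
    using Q'(1) E unfolding k_def by (metis of_int_mult of_int_power power_add)
  also have "\<dots> = of_int (l^(E-k) * PF) / of_int Q'" using l0 Q'0 by (simp add: field_simps)
  finally show ?thesis using Q'(2) unfolding lint_def by blast
qed

lemma common_denom:
  fixes xs :: "rat list"
  shows "\<exists>d::int. d > 0 \<and> (\<forall>x\<in>set xs. \<exists>n::int. of_int d * x = of_int n)"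
proof (induction xs)
  case Nil show ?case by (intro exI[of _ 1]) simp
next
  case (Cons x xs)
  then obtain d where d: "d > 0" "\<forall>x\<in>set xs. \<exists>n::int. of_int d * x = of_int n" by blast
  obtain a b where ab: "quotient_of x = (a, b)" by (cases "quotient_of x")
  have b: "b > 0" using ab quotient_of_denom_pos by blast
  have x: "x = of_int a / of_int b" using ab quotient_of_div by blast
  have "\<forall>y\<in>set (x # xs). \<exists>n::int. of_int (d*b) * y = of_int n"
  proof
    fix y assume "y \<in> set (x # xs)"
    then consider "y = x" | "y \<in> set xs" by auto
    thus "\<exists>n::int. of_int (d*b) * y = of_int n"
    proof cases
      case 1 thus ?thesis using x b by (intro exI[of _ "d*a"]) simp
    next
      case 2 then obtain n where "of_int d * y = of_int n" using d by blast
      thus ?thesis by (intro exI[of _ "n*b"]) (simp add: algebra_simps)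
    qed
  qed
  moreover have "d * b > 0" using d b by simp
  ultimately show ?case by blast
qed

lemma lint_zero: assumes "prime l" shows "0 \<in> lint l"
proof -
  have "\<not> l dvd 1" using assms not_prime_unit by blast
  thus ?thesis unfolding lint_def by (intro CollectI exI[of _ 0] exI[of _ 1]) auto
qed

lemma lint_sum:
  assumes l: "prime l" and V: "\<forall>v\<in>V. c * v \<in> lint l"
  shows "set xs \<subseteq> V \<Longrightarrow> set eps \<subseteq> {1,-1} \<Longrightarrow> c * sum_list (map2 (*) eps xs) \<in> lint l"
proof (induction xs arbitrary: eps)
  case Nil thus ?case using lint_zero[OF l] by simp
next
  case (Cons x xs)
  show ?case
  proof (cases eps)
    case Nil thus ?thesis using lint_zero[OF l] by simp
  next
    case (Cons e es)
    have IH: "c * sum_list (map2 (*) es xs) \<in> lint l" using Cons.IH Cons.prems Cons by auto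
    have cx: "c * x \<in> lint l" using V Cons.prems by auto
    have e: "e = 1 \<or> e = -1" using Cons.prems Cons by auto
    have "c * sum_list (map2 (*) eps (x # xs)) = e * (c * x) + c * sum_list (map2 (*) es xs)"
      using Cons by (simp add: algebra_simps)
    moreover have "e * (c * x) \<in> lint l" using e cx lint_neg by auto
    ultimately show ?thesis using lint_add[OF l _ IH] by simp
  qed
qed

lemma notEWP_form:
  fixes p q :: "rat poly" and q0 q1 q2 p0 p1 p2 :: rat
  assumes hq: "\<And>a. poly q a = q0 + q1*a + q2*a^2" and hp: "\<And>a. poly p a = p0 + p1*a + p2*a^2"
    and q2: "q2 \<noteq> 0" and nr: "\<And>a. poly q a \<noteq> 0"
  shows "\<not> EWP p q"
proof
  assume ewp: "EWP p q"
  obtain d :: int where d: "d > 0" "\<forall>x\<in>set [q0,q1,q2,p0,p1,p2]. \<exists>n::int. of_int d * x = of_int n"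
    using common_denom by blast
  obtain Q0 Q1 Q2 P0 P1 P2 :: int where
    E: "of_int d * q0 = of_int Q0" "of_int d * q1 = of_int Q1" "of_int d * q2 = of_int Q2"
       "of_int d * p0 = of_int P0" "of_int d * p1 = of_int P1" "of_int d * p2 = of_int P2"
    using d(2) by auto
  have d0: "(of_int d :: rat) \<noteq> 0" using d by simp
  have dq: "of_int d * poly q a = of_int Q0 + of_int Q1 * a + of_int Q2 * a^2" for a
    unfolding hq E[symmetric] by (simp add: algebra_simps)
  have dp: "of_int d * poly p a = of_int P0 + of_int P1 * a + of_int P2 * a^2" for a
    unfolding hp E[symmetric] by (simp add: algebra_simps)
  have Q2: "Q2 \<noteq> 0" using E(3) q2 d0 by (metis mult_eq_0_iff of_int_0)
  have Q0: "Q0 \<noteq> 0" using dq[of 0] nr[of 0] d0 by auto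
  define D where "D = Q1^2 - 4*Q0*Q2"
  have ns: "\<forall>k. D \<noteq> k^2"
  proof (intro allI notI)
    fix k assume Dk: "D = k^2"
    define a :: rat where "a = of_int (k - Q1) / of_int (2*Q2)"
    have Q2r: "(of_int Q2 :: rat) \<noteq> 0" using Q2 by simp
    have a2: "2 * of_int Q2 * a + of_int Q1 = (of_int k :: rat)" using Q2r by (simp add: a_def field_simps)
    have "4 * of_int Q2 * (of_int Q0 + of_int Q1 * a + of_int Q2 * a^2) =
          (2 * of_int Q2 * a + of_int Q1)^2 - (of_int D :: rat)"
      by (simp add: D_def power2_eq_square algebra_simps)
    also have "\<dots> = 0" using a2 Dk by simp
    finally have "of_int Q0 + of_int Q1 * a + of_int Q2 * a^2 = 0" using Q2r by simp
    hence "of_int d * poly q a = 0" using dq by simp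
    thus False using d0 nr by simp
  qed
  obtain l E where l: "prime l" and key: "\<forall>X Y. \<not> l dvd Y \<longrightarrow> \<not> l^(Suc E) dvd X^2 - D*Y^2"
    using prime_choice[OF ns] by blast
  have inl: "of_int l ^ E * v \<in> lint l" if v: "v \<in> rf_values p q" for v
  proof -
    obtain a where a: "v = poly p a / poly q a" using v by (auto simp: rf_values_def)
    obtain u w where uw: "quotient_of a = (u, w)" by (cases "quotient_of a")
    have w: "w > 0" using uw quotient_of_denom_pos by blast
    have au: "a = of_int u / of_int w" using uw quotient_of_div by blast
    have cop: "coprime u w" using uw quotient_of_coprime by blast
    define QF where "QF = Q2*u^2 + Q1*u*w + Q0*w^2"
    define PF where "PF = P2*u^2 + P1*u*w + P0*w^2"
    have w0: "(of_int w :: rat) \<noteq> 0" using w by simp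
    have QFe: "of_int QF = of_int d * of_int w^2 * poly q a"
      using dq[of a] w0 unfolding QF_def au by (simp add: field_simps power2_eq_square)
    have PFe: "of_int PF = of_int d * of_int w^2 * poly p a"
      using dp[of a] w0 unfolding PF_def au by (simp add: field_simps power2_eq_square)
    have QF0: "QF \<noteq> 0" using QFe d0 w0 nr[of a] by (metis mult_eq_0_iff of_int_0 power_eq_0_iff)
    have veq: "v = of_int PF / of_int QF" unfolding a PFe QFe using d0 w0 by simp
    have nd: "\<not> l^(Suc E) dvd QF"
    proof
      assume h: "l^(Suc E) dvd QF"
      have i1: "4*Q2*QF = (2*Q2*u + Q1*w)^2 - D*w^2"
        unfolding QF_def D_def by (simp add: power2_eq_square algebra_simps)
      have i2: "4*Q0*QF = (2*Q0*w + Q1*u)^2 - D*u^2"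
        unfolding QF_def D_def by (simp add: power2_eq_square algebra_simps)
      have "\<not> (l dvd u \<and> l dvd w)"
      proof
        assume "l dvd u \<and> l dvd w"
        hence "is_unit l" using cop coprime_common_divisor by blast
        thus False using l not_prime_unit by blast
      qed
      moreover have "l^(Suc E) dvd 4*Q2*QF" "l^(Suc E) dvd 4*Q0*QF" using h by simp_all
      ultimately show False using key i1 i2 by metis
    qed
    show ?thesis unfolding veq by (rule frac_in[OF l QF0 nd])
  qed
  obtain N where N: "\<forall>r::rat. \<exists>xs eps. length xs = N \<and> length eps = N \<and> set xs \<subseteq> rf_values p q \<and>
      set eps \<subseteq> {1, -1} \<and> r = sum_list (map2 (*) eps xs)"
    using ewp unfolding EWP_def is_virtual_base_def by blast
  obtain xs eps where xe: "set xs \<subseteq> rf_values p q" "set eps \<subseteq> {1, -1}"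
      "1 / of_int l ^ Suc E = sum_list (map2 (*) eps xs)"
    using N by blast
  have "of_int l ^ E * sum_list (map2 (*) eps xs) \<in> lint l"
    using lint_sum[OF l, of "rf_values p q" "of_int l ^ E"] inl xe(1,2) by blast
  moreover have "of_int l ^ E * sum_list (map2 (*) eps xs) = of_int l ^ E * (1 / of_int l ^ Suc E)"
    by (simp only: xe(3))
  moreover have "of_int l ^ E * (1 / of_int l ^ Suc E) = (1 / of_int l :: rat)"
  proof -
    have "(of_int l :: rat) \<noteq> 0" using l by auto
    thus ?thesis by (simp add: field_simps)
  qed
  ultimately show False using lint_not[OF l] by simp
qed

theorem theorem4p3:
  fixes p q :: "rat poly"
  assumes "q \<noteq> 0" and "coprime p q" and "rf_degree p q = 2"
  shows "(card (rf_poles p q) = 2 \<longrightarrow> WP p q)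
       \<and> (card (rf_poles p q) = 1 \<longrightarrow> EWP p q \<and> \<not> WP p q)
       \<and> (rf_poles p q = {} \<longrightarrow> \<not> EWP p q)"
proof -
  note q = assms(1) and cop = assms(2)
  have deg: "max (degree p) (degree q) = 2" using assms(3) by (simp add: rf_degree_def)
  hence dp: "degree p \<le> 2" and dq: "degree q \<le> 2" by auto
  define p0 where "p0 = coeff p 0"
  define p1 where "p1 = coeff p 1"
  define p2 where "p2 = coeff p 2"
  define q0 where "q0 = coeff q 0"
  define q1 where "q1 = coeff q 1"
  define q2 where "q2 = coeff q 2"
  have hp: "\<And>a. poly p a = p0 + p1*a + p2*a^2" using poly_deg2[OF dp] p0_def p1_def p2_def by simp
  have hq: "\<And>a. poly q a = q0 + q1*a + q2*a^2" using poly_deg2[OF dq] q0_def q1_def q2_def by simp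
  define R where "R = {a. poly q a = 0}"
  have fin: "finite R" unfolding R_def using poly_roots_finite[OF q] .
  have poles: "rf_poles p q = Some ` R \<union> (if degree q < degree p then {None} else {})"
    by (simp add: rf_poles_def R_def)
  have card: "card (rf_poles p q) = card R + (if degree q < degree p then 1 else 0)"
  proof -
    have "card (Some ` R) = card R" by (rule card_image) simp
    moreover have "None \<notin> Some ` R" by auto
    ultimately show ?thesis unfolding poles using fin by (auto simp: card_insert_if)
  qed
  have cr: "poly p r \<noteq> 0" if "r \<in> R" for r using coprime_root[OF cop] that by (simp add: R_def)
  consider "degree q = 0" | "degree q = 1" | "degree q = 2" using dq by linarith
  thus ?thesis
  proof cases
    case 1
    have dp2: "degree p = 2" using deg 1 by simp
    have pn: "p \<noteq> 0" using dp2 by auto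
    have p2: "p2 \<noteq> 0" using dp2 pn p2_def by (metis leading_coeff_0_iff)
    have q0: "q0 \<noteq> 0" using 1 q q0_def by (metis leading_coeff_0_iff)
    have q12: "q1 = 0" "q2 = 0" using coeff_eq_0[of q 1] coeff_eq_0[of q 2] 1 q1_def q2_def by simp_all
    have hq': "\<And>a. poly q a = q0" using hq q12 by simp
    have R: "R = {}" using hq' q0 by (simp add: R_def)
    have c1: "card (rf_poles p q) = 1" using card R 1 dp2 by simp
    have "rf_poles p q \<noteq> {}" using poles 1 dp2 by simp
    moreover have "EWP p q \<and> \<not> WP p q" using case_const[OF hq' q0 hp p2] .
    ultimately show ?thesis using c1 by simp
  next
    case 2
    have dp2: "degree p = 2" using deg 2 by simp
    have pn: "p \<noteq> 0" using dp2 by auto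
    have p2: "p2 \<noteq> 0" using dp2 pn p2_def by (metis leading_coeff_0_iff)
    have q1: "q1 \<noteq> 0" using 2 q q1_def by (metis leading_coeff_0_iff)
    have q2: "q2 = 0" using coeff_eq_0[of q 2] 2 q2_def by simp
    have hq': "\<And>a. poly q a = q0 + q1*a" using hq q2 by simp
    define r where "r = - q0/q1"
    have R: "R = {r}" using hq' q1 by (auto simp: R_def r_def field_simps)
    have c2: "card (rf_poles p q) = 2" using card R 2 dp2 by simp
    have pr: "p0 + p1*r + p2*r^2 \<noteq> 0" using cr[of r] R hp by simp
    have "WP p q" using case_lin[OF hq' q1 hp p2 pr r_def] .
    moreover have "rf_poles p q \<noteq> {}"
    proof
      assume "rf_poles p q = {}" thus False using c2 by simp
    qed
    ultimately show ?thesis using c2 by simp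
  next
    case 3
    have "lead_coeff q \<noteq> 0" using q by simp
    hence q2: "q2 \<noteq> 0" using 3 q2_def by simp
    have ndp: "\<not> degree q < degree p" using 3 dp by simp
    have cR: "card (rf_poles p q) = card R" using card ndp by simp
    have eR: "rf_poles p q = {} \<longleftrightarrow> R = {}" using poles ndp by simp
    have A: "WP p q" if c: "card R = 2"
    proof -
      from c obtain r s where rs: "R = {r, s}" "r \<noteq> s" unfolding card_2_iff by blast
      have er: "q0 + q1*r + q2*r^2 = 0" and es: "q0 + q1*s + q2*s^2 = 0"
        using rs hq unfolding R_def by auto
      have "(r - s) * (q2*(r+s) + q1) = 0" using er es by (simp add: algebra_simps power2_eq_square)
      hence v1: "q1 = - q2*(r+s)" using rs(2) by simp
      have "q0 = -(q1*r) - q2*r^2" using er by (simp add: algebra_simps)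
      also have "\<dots> = -((- q2*(r+s))*r) - q2*r^2" using v1 by simp
      also have "\<dots> = q2*r*s" by (simp add: algebra_simps power2_eq_square)
      finally have v0: "q0 = q2*r*s" .
      have hq': "\<And>a. poly q a = q2 * (a - r) * (a - s)"
        unfolding hq v0 v1 by (simp add: algebra_simps power2_eq_square)
      show ?thesis using case_two[OF hq' q2 rs(2) hp] cr rs(1) by simp
    qed
    have B: "EWP p q \<and> \<not> WP p q" if c: "card R = 1"
    proof -
      from c obtain r where r: "R = {r}" by (rule card_1_singletonE)
      have er: "q0 + q1*r + q2*r^2 = 0" using r hq unfolding R_def by auto
      define s where "s = -q1/q2 - r"
      have "q0 + q1*s + q2*s^2 = (q0 + q1*r + q2*r^2) + (s - r)*(q2*(s+r) + q1)"
        by (simp add: algebra_simps power2_eq_square)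
      also have "q2*(s+r) + q1 = 0" using q2 by (simp add: s_def field_simps)
      finally have "poly q s = 0" using er hq by simp
      hence "s = r" using r by (auto simp: R_def)
      hence v1: "q1 = -2*q2*r" using q2 by (simp add: s_def field_simps)
      have "q0 = -(q1*r) - q2*r^2" using er by (simp add: algebra_simps)
      also have "\<dots> = -((-2*q2*r)*r) - q2*r^2" using v1 by simp
      also have "\<dots> = q2*r^2" by (simp add: algebra_simps power2_eq_square)
      finally have v0: "q0 = q2*r^2" .
      have hq': "\<And>a. poly q a = q2 * (a - r)^2"
        unfolding hq v0 v1 by (simp add: algebra_simps power2_eq_square)
      show ?thesis using case_double[OF hq' q2 hp] cr r by simp
    qed
    have C: "\<not> EWP p q" if e: "R = {}"
    proof (rule notEWP_form[OF hq hp q2])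
      fix a show "poly q a \<noteq> 0" using e by (auto simp: R_def)
    qed
    show ?thesis using A B C cR eR by simp
  qed
qed

end
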